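(* In the setting below, with $\rho_m:=\sum_{G\in\mathcal A^m_{\ge L}(F)}\rho(G)$ and $\rho(G):=e^{-\beta H_{(\bar G)^c}}\prod_j\eta(G_j)$ (the $G_j$ being the connected components of $G$), one has for every integer $m\ge1$ $$\rho_m=\sum_{k=m}^\infty\binom km\sum_{w\in\mathcal C^k_{\ge L}(F)}f(w).$$
   Context: $V$ finite, $\mathcal H=\bigotimes_{x\in V}\mathcal H_x$ finite-dimensional; $H=\sum_{\lambda\in E}h_\lambda$, $h_\lambda$ Hermitian with support $\lambda$, $E$ the set of supports, $H_K=\sum_{\lambda\in K}h_\lambda$, $\beta\in\mathbb R$; $F\subset E$, $L\ge1$. Connected edge sets (animals): any two edges joined by a chain of consecutively intersecting edges in the set; connected components are maximal connected subsets. $\mathcal A_{\ge L}(F)$: connected $G\subset E$ with $|G|\ge L$, $G\cap F\ne\emptyset$; $\mathcal A^m_{\ge L}(F)$: unions of $m$ pairwise non-overlapping members of $\mathcal A_{\ge L}(F)$. $G^c=E\setminus G$, $\bar G=\{\lambda\in E:\exists\lambda'\in G,\lambda\cap\lambda'\ne\emptyset\}$. Words: $K^\ast=\bigcup_{l\ge0}K^l$, $|w|$ length, $h(w)=h_{w_1}\cdots h_{w_{|w|}}$, $f(w)=\frac{(-\beta)^{|w|}}{|w|!}h(w)$, $\eta(G'):=\sum_{w\in G'^\ast:\,G'\subset w}f(w)$ where $G'\subset w$ means each element of $G'$ occurs in $w$. Maximal clusters of $w$: subsequences of $w$ consisting of all letters lying in one connected component of the letter set of $w$. $\mathcal C^k_{\ge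 L}(F)$: words having exactly $k$ maximal clusters whose letter set has at least $L$ elements and contains an element of $F$. All series converge absolutely. *)

theory Defs
  imports "HOL-Analysis.Analysis"
begin

text \<open>Sites: a finite type 'v (V = UNIV). Site x carries the local space C^(d x), with
  basis indexed by {0..<d x}. The tensor product has basis the configurations below;
  operators are complex matrices indexed by configurations.\<close>

definition conf :: "('v \<Rightarrow> nat) \<Rightarrow> ('v \<Rightarrow> nat) set" where
  "conf d = {\<sigma>. \<forall>x. \<sigma> x < d x}"

type_synonym 'v qop = "('v \<Rightarrow> nat) \<Rightarrow> ('v \<Rightarrow> nat) \<Rightarrow> complex"

definition opid :: "'v qop" where
  "opid = (\<lambda>\<sigma> \<tau>. if \<sigma> = \<tau> then 1 else 0)"

definition opmult :: "('v \<Rightarrow> nat) \<Rightarrow> 'v qop \<Rightarrow> 'v qop \<Rightarrow> 'v qop" where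
  "opmult d A B = (\<lambda>\<sigma> \<tau>. \<Sum>\<rho>\<in>conf d. A \<sigma> \<rho> * B \<rho> \<tau>)"

definition opscale :: "complex \<Rightarrow> 'v qop \<Rightarrow> 'v qop" where
  "opscale c A = (\<lambda>\<sigma> \<tau>. c * A \<sigma> \<tau>)"

definition opsum :: "'a set \<Rightarrow> ('a \<Rightarrow> 'v qop) \<Rightarrow> 'v qop" where
  "opsum S g = (\<lambda>\<sigma> \<tau>. \<Sum>a\<in>S. g a \<sigma> \<tau>)"

primrec oppow :: "('v \<Rightarrow> nat) \<Rightarrow> 'v qop \<Rightarrow> nat \<Rightarrow> 'v qop" where
  "oppow d A 0 = opid"
| "oppow d A (Suc n) = opmult d A (oppow d A n)"

text \<open>Matrix exponential (the entrywise series converges in finite dimension).\<close>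
definition opexp :: "('v \<Rightarrow> nat) \<Rightarrow> 'v qop \<Rightarrow> 'v qop" where
  "opexp d A = (\<lambda>\<sigma> \<tau>. \<Sum>n. oppow d A n \<sigma> \<tau> / of_nat (fact n))"

text \<open>A acts as (something) tensor identity: A is supported in the site set S.\<close>
definition supported_in :: "('v \<Rightarrow> nat) \<Rightarrow> 'v set \<Rightarrow> 'v qop \<Rightarrow> bool" where
  "supported_in d S A \<longleftrightarrow>
     (\<forall>\<sigma>\<in>conf d. \<forall>\<tau>\<in>conf d. (\<exists>x. x \<notin> S \<and> \<sigma> x \<noteq> \<tau> x) \<longrightarrow> A \<sigma> \<tau> = 0) \<and>
     (\<forall>\<sigma>\<in>conf d. \<forall>\<tau>\<in>conf d. \<forall>\<sigma>'\<in>conf d. \<forall>\<tau>'\<in>conf d.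
        (\<forall>x\<in>S. \<sigma> x = \<sigma>' x \<and> \<tau> x = \<tau>' x) \<and> (\<forall>x. x \<notin> S \<longrightarrow> \<sigma> x = \<tau> x \<and> \<sigma>' x = \<tau>' x)
        \<longrightarrow> A \<sigma> \<tau> = A \<sigma>' \<tau>')"

definition hermitian :: "('v \<Rightarrow> nat) \<Rightarrow> 'v qop \<Rightarrow> bool" where
  "hermitian d A \<longleftrightarrow> (\<forall>\<sigma>\<in>conf d. \<forall>\<tau>\<in>conf d. A \<sigma> \<tau> = cnj (A \<tau> \<sigma>))"

definition wordop :: "('v \<Rightarrow> nat) \<Rightarrow> ('e \<Rightarrow> 'v qop) \<Rightarrow> 'e list \<Rightarrow> 'v qop" where
  "wordop d h w = foldr (\<lambda>a B. opmult d (h a) B) w opid"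

definition fw :: "('v \<Rightarrow> nat) \<Rightarrow> ('e \<Rightarrow> 'v qop) \<Rightarrow> real \<Rightarrow> 'e list \<Rightarrow> 'v qop" where
  "fw d h \<beta> w = opscale ((- complex_of_real \<beta>) ^ length w / of_nat (fact (length w))) (wordop d h w)"

definition eta :: "('v \<Rightarrow> nat) \<Rightarrow> ('e \<Rightarrow> 'v qop) \<Rightarrow> real \<Rightarrow> 'e set \<Rightarrow> 'v qop" where
  "eta d h \<beta> G = (\<lambda>\<sigma> \<tau>. \<Sum>\<^sub>\<infinity>w\<in>{w. set w \<subseteq> G \<and> G \<subseteq> set w}. fw d h \<beta> w \<sigma> \<tau>)"

definition connected_edges :: "'v set set \<Rightarrow> bool" where
  "connected_edges G \<longleftrightarrow>
     (\<forall>a\<in>G. \<forall>b\<in>G. (a, b) \<in> ({(x, y). x \<in> G \<and> y \<in> G \<and> x \<inter> y \<noteq> {}})\<^sup>*)"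

definition edge_components :: "'v set set \<Rightarrow> 'v set set set" where
  "edge_components G = {C. C \<subseteq> G \<and> C \<noteq> {} \<and> connected_edges C \<and>
      (\<forall>C'. C \<subseteq> C' \<and> C' \<subseteq> G \<and> connected_edges C' \<longrightarrow> C' = C)}"

definition edge_closure :: "'v set set \<Rightarrow> 'v set set \<Rightarrow> 'v set set" where
  "edge_closure E G = {l\<in>E. \<exists>l'\<in>G. l \<inter> l' \<noteq> {}}"

definition animals :: "'v set set \<Rightarrow> nat \<Rightarrow> 'v set set \<Rightarrow> 'v set set set" where
  "animals E L F = {G. G \<subseteq> E \<and> connected_edges G \<and> card G \<ge> L \<and> G \<inter> F \<noteq> {}}"

definition non_overlapping :: "'v set set \<Rightarrow> 'v set set \<Rightarrow> bool" where
  "non_overlapping A B \<longleftrightarrow> (\<forall>a\<in>A. \<forall>b\<in>B. a \<inter> b = {})"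

definition animals_m :: "'v set set \<Rightarrow> nat \<Rightarrow> 'v set set \<Rightarrow> nat \<Rightarrow> 'v set set set" where
  "animals_m E L F m = {\<Union>S | S. S \<subseteq> animals E L F \<and> card S = m \<and> pairwise non_overlapping S}"

text \<open>rho(G) = exp(-beta H_{(bar G)^c}) prod_j eta(G_j); the G_j pairwise commute, so an
  arbitrary enumeration of the components is used.\<close>
definition rhoG :: "('v \<Rightarrow> nat) \<Rightarrow> ('v set \<Rightarrow> 'v qop) \<Rightarrow> real \<Rightarrow> 'v set set \<Rightarrow> 'v set set \<Rightarrow> 'v qop" where
  "rhoG d h \<beta> E G =
     opmult d (opexp d (opscale (- complex_of_real \<beta>) (opsum (E - edge_closure E G) h)))
       (foldr (opmult d) (map (eta d h \<beta>) (SOME cs. distinct cs \<and> set cs = edge_components G)) opid)"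

definition rho_m :: "('v \<Rightarrow> nat) \<Rightarrow> ('v set \<Rightarrow> 'v qop) \<Rightarrow> real \<Rightarrow> 'v set set \<Rightarrow> nat \<Rightarrow> 'v set set \<Rightarrow> nat \<Rightarrow> 'v qop" where
  "rho_m d h \<beta> E L F m = opsum (animals_m E L F m) (rhoG d h \<beta> E)"

text \<open>The maximal clusters of w correspond to the connected components
  of its letter set (the cluster's letter set is the component).\<close>
definition cluster_words :: "'v set set \<Rightarrow> nat \<Rightarrow> 'v set set \<Rightarrow> nat \<Rightarrow> 'v set list set" where
  "cluster_words E L F k = {w. set w \<subseteq> E \<and>
      card {C \<in> edge_components (set w). card C \<ge> L \<and> C \<inter> F \<noteq> {}} = k}"

end

theory Submission
  imports Defs
begin


definition eqc :: "('v \<Rightarrow> nat) \<Rightarrow> 'v qop \<Rightarrow> 'v qop \<Rightarrow> bool" where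
  "eqc d A B \<longleftrightarrow> (\<forall>\<sigma>\<in>conf d. \<forall>\<tau>\<in>conf d. A \<sigma> \<tau> = B \<sigma> \<tau>)"

lemma eqc_refl[simp]: "eqc d A A" by (simp add: eqc_def)
lemma eqc_sym: "eqc d A B \<Longrightarrow> eqc d B A" by (simp add: eqc_def)
lemma eqc_trans[trans]: "eqc d A B \<Longrightarrow> eqc d B C \<Longrightarrow> eqc d A C" by (simp add: eqc_def)

lemma finite_conf: "finite (conf (d::'v::finite \<Rightarrow> nat))"
proof -
  have "conf d \<subseteq> PiE UNIV (\<lambda>x. {..<d x})" by (auto simp: conf_def PiE_def extensional_def)
  thus ?thesis by (rule finite_subset) (intro finite_PiE, auto)
qed

lemma opmult_assoc: "opmult d (opmult d A B) C = opmult d A (opmult d B C)"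
  unfolding opmult_def
  by (auto simp: fun_eq_iff sum_distrib_left sum_distrib_right mult.assoc intro: sum.swap)

lemma opmult_cong: "eqc d A A' \<Longrightarrow> eqc d B B' \<Longrightarrow> eqc d (opmult d A B) (opmult d A' B')"
  unfolding eqc_def opmult_def by (auto intro!: sum.cong)

lemma opmult_id_left: "eqc d (opmult d opid A) (A::('v::finite) qop)"
proof -
  have "(\<Sum>\<rho>\<in>conf d. (if \<sigma> = \<rho> then 1 else 0) * A \<rho> \<tau>) = A \<sigma> \<tau>" if "\<sigma> \<in> conf d" for \<sigma> \<tau>
  proof -
    have "(\<Sum>\<rho>\<in>conf d. (if \<sigma> = \<rho> then 1 else 0) * A \<rho> \<tau>) = (\<Sum>\<rho>\<in>conf d. (if \<sigma> = \<rho> then A \<rho> \<tau> else 0))"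
      by (rule sum.cong) auto
    also have "\<dots> = A \<sigma> \<tau>" using that by (simp add: finite_conf)
    finally show ?thesis .
  qed
  thus ?thesis unfolding eqc_def opmult_def opid_def by auto
qed

lemma opmult_id_right: "eqc d (opmult d A opid) (A::('v::finite) qop)"
proof -
  have "(\<Sum>\<rho>\<in>conf d. A \<sigma> \<rho> * (if \<rho> = \<tau> then 1 else 0)) = A \<sigma> \<tau>" if "\<tau> \<in> conf d" for \<sigma> \<tau>
  proof -
    have "(\<Sum>\<rho>\<in>conf d. A \<sigma> \<rho> * (if \<rho> = \<tau> then 1 else 0)) = (\<Sum>\<rho>\<in>conf d. (if \<rho> = \<tau> then A \<sigma> \<rho> else 0))"
      by (rule sum.cong) auto
    also have "\<dots> = A \<sigma> \<tau>" using that by (simp add: finite_conf)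
    finally show ?thesis .
  qed
  thus ?thesis unfolding eqc_def opmult_def opid_def by auto
qed

lemma opmult_scale: "opmult d (opscale a A) (opscale b B) = opscale (a*b) (opmult d A B)"
  unfolding opmult_def opscale_def by (auto simp: fun_eq_iff sum_distrib_left mult_ac)

lemma wordop_Nil[simp]: "wordop d h [] = opid" by (simp add: wordop_def)
lemma wordop_Cons[simp]: "wordop d h (x#w) = opmult d (h x) (wordop d h w)" by (simp add: wordop_def)

lemma wordop_append: "eqc (d::'v::finite\<Rightarrow>nat) (wordop d h (u@v)) (opmult d (wordop d h u) (wordop d h v))"
proof (induction u)
  case Nil then show ?case by (simp add: eqc_sym opmult_id_left)
next
  case (Cons a u)
  have "eqc d (opmult d (h a) (wordop d h (u@v))) (opmult d (h a) (opmult d (wordop d h u) (wordop d h v)))"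
    using Cons by (rule opmult_cong[OF eqc_refl])
  then show ?case by (simp add: opmult_assoc)
qed

definition comm :: "('v \<Rightarrow> nat) \<Rightarrow> 'v qop \<Rightarrow> 'v qop \<Rightarrow> bool" where
  "comm d A B \<longleftrightarrow> eqc d (opmult d A B) (opmult d B A)"

lemma comm_sym: "comm d A B \<Longrightarrow> comm d B A" by (simp add: comm_def eqc_sym)

lemma comm_id: "comm d (A::('v::finite) qop) opid"
  unfolding comm_def using opmult_id_left opmult_id_right eqc_trans eqc_sym by metis

lemma comm_mult:
  assumes "comm d A B1" "comm d A B2"
  shows "comm d A (opmult d B1 B2)"
proof -
  have "eqc d (opmult d A (opmult d B1 B2)) (opmult d (opmult d A B1) B2)" by (simp add: opmult_assoc)
  also have "eqc d \<dots> (opmult d (opmult d B1 A) B2)" 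
    using assms(1) unfolding comm_def by (rule opmult_cong[OF _ eqc_refl])
  also have "eqc d \<dots> (opmult d B1 (opmult d A B2))" by (simp add: opmult_assoc)
  also have "eqc d \<dots> (opmult d B1 (opmult d B2 A))" 
    using assms(2) unfolding comm_def by (rule opmult_cong[OF eqc_refl])
  also have "eqc d \<dots> (opmult d (opmult d B1 B2) A)" by (simp add: opmult_assoc)
  finally show ?thesis unfolding comm_def .
qed
  


lemma single_sum:
  assumes "finite X" "r \<in> X" "\<And>x. x \<in> X \<Longrightarrow> x \<noteq> r \<Longrightarrow> g x = 0"
  shows "sum g X = (g r :: complex)"
proof -
  have "sum g X = (\<Sum>x\<in>X. if x = r then g r else 0)" by (rule sum.cong) (use assms in auto)
  also have "\<dots> = g r" using assms by simp
  finally show ?thesis .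
qed

lemma supp_comm:
  fixes d :: "'v::finite \<Rightarrow> nat"
  assumes SA: "supported_in d S A" and TB: "supported_in d T B" and ST: "S \<inter> T = {}"
  shows "comm d A B"
  unfolding comm_def eqc_def
proof (intro ballI)
  fix \<sigma> \<tau> assume s: "\<sigma> \<in> conf d" and t: "\<tau> \<in> conf d"
  note A0 = SA[unfolded supported_in_def, THEN conjunct1, rule_format]
  note A1 = SA[unfolded supported_in_def, THEN conjunct2, rule_format]
  note B0 = TB[unfolded supported_in_def, THEN conjunct1, rule_format]
  note B1 = TB[unfolded supported_in_def, THEN conjunct2, rule_format]
  show "opmult d A B \<sigma> \<tau> = opmult d B A \<sigma> \<tau>"
  proof (cases "\<exists>x. x \<notin> S \<and> x \<notin> T \<and> \<sigma> x \<noteq> \<tau> x")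
    case True
    then obtain x where x: "x \<notin> S" "x \<notin> T" "\<sigma> x \<noteq> \<tau> x" by blast
    have z1: "A \<sigma> \<rho> * B \<rho> \<tau> = 0" if "\<rho> \<in> conf d" for \<rho>
    proof (cases "\<rho> x = \<sigma> x")
      case True hence "B \<rho> \<tau> = 0" using B0[OF that t] x by force
      thus ?thesis by simp
    next
      case False hence "A \<sigma> \<rho> = 0" using A0[OF s that] x by force
      thus ?thesis by simp
    qed
    have z2: "B \<sigma> \<rho> * A \<rho> \<tau> = 0" if "\<rho> \<in> conf d" for \<rho>
    proof (cases "\<rho> x = \<sigma> x")
      case True hence "A \<rho> \<tau> = 0" using A0[OF that t] x by force
      thus ?thesis by simp
    next
      case False hence "B \<sigma> \<rho> = 0" using B0[OF s that] x by force
      thus ?thesis by simp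
    qed
        have "(\<Sum>\<rho>\<in>conf d. A \<sigma> \<rho> * B \<rho> \<tau>) = 0" by (rule sum.neutral) (use z1 in blast)
    moreover have "(\<Sum>\<rho>\<in>conf d. B \<sigma> \<rho> * A \<rho> \<tau>) = 0" by (rule sum.neutral) (use z2 in blast)
    ultimately show ?thesis unfolding opmult_def by simp
  next
    case False
    define r1 where "r1 = (\<lambda>x. if x \<in> S then \<tau> x else \<sigma> x)"
    define r2 where "r2 = (\<lambda>x. if x \<in> T then \<tau> x else \<sigma> x)"
    have r1c: "r1 \<in> conf d" and r2c: "r2 \<in> conf d" using s t by (auto simp: conf_def r1_def r2_def)
    have "opmult d A B \<sigma> \<tau> = A \<sigma> r1 * B r1 \<tau>"
      unfolding opmult_def
    proof (rule single_sum[OF finite_conf r1c])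
      fix \<rho> assume r: "\<rho> \<in> conf d" "\<rho> \<noteq> r1"
      then obtain x where x: "\<rho> x \<noteq> r1 x" by auto
      show "A \<sigma> \<rho> * B \<rho> \<tau> = 0"
      proof (cases "x \<in> S")
        case True
        then have "x \<notin> T" using ST by auto
        have "B \<rho> \<tau> = 0" using B0[OF r(1) t] x True \<open>x\<notin>T\<close> by (force simp: r1_def)
        thus ?thesis by simp
      next
        case False
        have "A \<sigma> \<rho> = 0" using A0[OF s r(1)] x False by (force simp: r1_def)
        thus ?thesis by simp
      qed
    qed
    moreover have "opmult d B A \<sigma> \<tau> = B \<sigma> r2 * A r2 \<tau>"
      unfolding opmult_def
    proof (rule single_sum[OF finite_conf r2c])
      fix \<rho> assume r: "\<rho> \<in> conf d" "\<rho> \<noteq> r2"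
      then obtain x where x: "\<rho> x \<noteq> r2 x" by auto
      show "B \<sigma> \<rho> * A \<rho> \<tau> = 0"
      proof (cases "x \<in> T")
        case True
        then have "x \<notin> S" using ST by auto
        have "A \<rho> \<tau> = 0" using A0[OF r(1) t] x True \<open>x\<notin>S\<close> by (force simp: r2_def)
        thus ?thesis by simp
      next
        case False
        have "B \<sigma> \<rho> = 0" using B0[OF s r(1)] x False by (force simp: r2_def)
        thus ?thesis by simp
      qed
    qed
    moreover have "A \<sigma> r1 = A r2 \<tau>"
      by (rule A1[OF s r1c r2c t]) (use False ST in \<open>auto simp: r1_def r2_def\<close>)
    moreover have "B r1 \<tau> = B \<sigma> r2"
      by (rule B1[OF r1c t s r2c]) (use False ST in \<open>auto simp: r1_def r2_def\<close>)
    ultimately show ?thesis by simp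
  qed
qed



locale qsys =
  fixes d :: "'v::finite \<Rightarrow> nat" and h :: "'v set \<Rightarrow> 'v qop" and E :: "'v set set" and \<beta> :: real
  assumes supp: "\<And>l. l \<in> E \<Longrightarrow> supported_in d l (h l)"
    and nonempty: "\<And>l. l \<in> E \<Longrightarrow> l \<noteq> {}"
begin

lemma finite_E: "finite E"
  by (rule finite_subset[of _ UNIV]) auto

lemma comm_h_word:
  assumes "a \<in> E" "set v \<subseteq> E" "\<forall>b\<in>set v. a \<inter> b = {}"
  shows "comm d (h a) (wordop d h v)"
  using assms
proof (induction v)
  case Nil then show ?case by (simp add: comm_id)
next
  case (Cons b v)
  have "comm d (h a) (h b)" using supp Cons.prems by (intro supp_comm) auto
  with Cons show ?case by (auto intro: comm_mult)
qed

lemma comm_words: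
  assumes "set u \<subseteq> E" "set v \<subseteq> E" "non_overlapping (set u) (set v)"
  shows "comm d (wordop d h u) (wordop d h v)"
  using assms
proof (induction u)
  case Nil show ?case unfolding wordop_Nil by (rule comm_sym, rule comm_id)
next
  case (Cons a u)
  have "comm d (wordop d h v) (h a)"
    by (rule comm_sym, rule comm_h_word) (use Cons.prems in \<open>auto simp: non_overlapping_def\<close>)
  moreover have "comm d (wordop d h v) (wordop d h u)"
    by (rule comm_sym, rule Cons.IH) (use Cons.prems in \<open>auto simp: non_overlapping_def\<close>)
  ultimately have "comm d (wordop d h v) (opmult d (h a) (wordop d h u))" by (rule comm_mult)
  thus ?case unfolding wordop_Cons by (rule comm_sym)
qed

lemma word_split:
  assumes "set w \<subseteq> A \<union> B" "A \<union> B \<subseteq> E" "non_overlapping A B"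
  shows "eqc d (wordop d h w) (opmult d (wordop d h (filter (\<lambda>x. x \<in> A) w)) (wordop d h (filter (\<lambda>x. x \<in> B) w)))"
  using assms(1)
proof (induction w)
  case Nil then show ?case by (simp add: eqc_sym[OF opmult_id_left])
next
  case (Cons x w)
  let ?WA = "wordop d h (filter (\<lambda>x. x \<in> A) w)" and ?WB = "wordop d h (filter (\<lambda>x. x \<in> B) w)"
  have IH: "eqc d (wordop d h w) (opmult d ?WA ?WB)" using Cons by auto
  have disj: "A \<inter> B = {}" using assms(2,3) nonempty unfolding non_overlapping_def by fastforce
  show ?case
  proof (cases "x \<in> A")
    case True
    hence "x \<notin> B" using disj by auto
    have "eqc d (wordop d h (x#w)) (opmult d (h x) (opmult d ?WA ?WB))"
      using IH by (simp add: opmult_cong[OF eqc_refl])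
    also have "eqc d \<dots> (opmult d (opmult d (h x) ?WA) ?WB)" by (simp add: opmult_assoc)
    finally show ?thesis using True \<open>x \<notin> B\<close> by simp
  next
    case False
    hence xB: "x \<in> B" using Cons by auto
    have c: "comm d ?WA (h x)"
    proof (rule comm_sym, rule comm_h_word)
      show "x \<in> E" using xB assms(2) by auto
      show "set (filter (\<lambda>x. x \<in> A) w) \<subseteq> E" using assms(2) by auto
      show "\<forall>b\<in>set (filter (\<lambda>x. x \<in> A) w). x \<inter> b = {}"
        using xB assms(3) unfolding non_overlapping_def by auto
    qed
    have "eqc d (wordop d h (x#w)) (opmult d (h x) (opmult d ?WA ?WB))"
      using IH by (simp add: opmult_cong[OF eqc_refl])
    also have "eqc d \<dots> (opmult d (opmult d (h x) ?WA) ?WB)" by (simp add: opmult_assoc)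
    also have "eqc d \<dots> (opmult d (opmult d ?WA (h x)) ?WB)"
      using c unfolding comm_def by (intro opmult_cong[OF _ eqc_refl] eqc_sym[of d "opmult d ?WA (h x)"])
    also have "eqc d \<dots> (opmult d ?WA (opmult d (h x) ?WB))" by (simp add: opmult_assoc)
    finally show ?thesis using False xB by simp
  qed
qed

end


context qsys begin

definition Mb where "Mb = 1 + (\<Sum>l\<in>E. \<Sum>\<sigma>\<in>conf d. \<Sum>\<tau>\<in>conf d. norm (h l \<sigma> \<tau>))"
definition Kb where "Kb = real (card (conf d)) * Mb"

lemma Mb_ge: "Mb \<ge> 1" unfolding Mb_def by (simp add: sum_nonneg)
lemma Kb_nonneg: "Kb \<ge> 0" unfolding Kb_def using Mb_ge by simp

lemma entry_bound:
  assumes "l \<in> E" "\<sigma> \<in> conf d" "\<tau> \<in> conf d"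
  shows "norm (h l \<sigma> \<tau>) \<le> Mb"
proof -
  have "norm (h l \<sigma> \<tau>) \<le> (\<Sum>\<tau>\<in>conf d. norm (h l \<sigma> \<tau>))"
    using assms by (intro member_le_sum) (auto simp: finite_conf)
  also have "\<dots> \<le> (\<Sum>\<sigma>\<in>conf d. \<Sum>\<tau>\<in>conf d. norm (h l \<sigma> \<tau>))"
    using assms by (intro member_le_sum[of _ _ "\<lambda>\<sigma>. \<Sum>\<tau>\<in>conf d. norm (h l \<sigma> \<tau>)"]) (auto simp: finite_conf sum_nonneg)
  also have "\<dots> \<le> (\<Sum>l\<in>E. \<Sum>\<sigma>\<in>conf d. \<Sum>\<tau>\<in>conf d. norm (h l \<sigma> \<tau>))"
    using assms by (intro member_le_sum[of _ _ "\<lambda>l. \<Sum>\<sigma>\<in>conf d. \<Sum>\<tau>\<in>conf d. norm (h l \<sigma> \<tau>)"]) (auto simp: finite_E sum_nonneg)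
  finally show ?thesis unfolding Mb_def by simp
qed

lemma word_bound:
  assumes "set w \<subseteq> E" "\<sigma> \<in> conf d" "\<tau> \<in> conf d"
  shows "norm (wordop d h w \<sigma> \<tau>) \<le> Kb ^ length w"
  using assms
proof (induction w arbitrary: \<sigma>)
  case Nil then show ?case by (simp add: opid_def)
next
  case (Cons x w)
  have "norm (wordop d h (x#w) \<sigma> \<tau>) = norm (\<Sum>\<rho>\<in>conf d. h x \<sigma> \<rho> * wordop d h w \<rho> \<tau>)"
    by (simp add: opmult_def)
  also have "\<dots> \<le> (\<Sum>\<rho>\<in>conf d. norm (h x \<sigma> \<rho> * wordop d h w \<rho> \<tau>))" by (rule norm_sum)
  also have "\<dots> \<le> (\<Sum>\<rho>\<in>conf d. Mb * Kb ^ length w)"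
    unfolding norm_mult
    by (intro sum_mono mult_mono entry_bound Cons) (use Cons.prems Mb_ge in auto)
  also have "\<dots> = Kb ^ length (x#w)" by (simp add: Kb_def)
  finally show ?case .
qed

lemma fw_bound:
  assumes "set w \<subseteq> E" "\<sigma> \<in> conf d" "\<tau> \<in> conf d"
  shows "norm (fw d h \<beta> w \<sigma> \<tau>) \<le> (\<bar>\<beta>\<bar> * Kb) ^ length w / fact (length w)"
proof -
  have "norm (fw d h \<beta> w \<sigma> \<tau>) = \<bar>\<beta>\<bar> ^ length w / fact (length w) * norm (wordop d h w \<sigma> \<tau>)"
    by (simp add: fw_def opscale_def norm_mult norm_divide norm_power)
  also have "\<dots> \<le> \<bar>\<beta>\<bar> ^ length w / fact (length w) * Kb ^ length w"
    by (intro mult_left_mono word_bound assms) auto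
  finally show ?thesis by (simp add: power_mult_distrib)
qed

lemma exp_partial_bound:
  fixes x :: real assumes "x \<ge> 0"
  shows "(\<Sum>n\<le>N. x ^ n / fact n) \<le> exp x"
proof -
  have "(\<lambda>n. x^n /\<^sub>R fact n) sums exp x" by (rule exp_converges)
  hence s: "(\<lambda>n. x^n / fact n) sums exp x" by (simp add: divide_inverse mult.commute)
  have "(\<Sum>n\<in>{..<Suc N}. x ^ n / fact n) \<le> exp x"
    using sum_le_suminf[OF sums_summable[OF s], of "{..<Suc N}"] sums_unique[OF s] assms by auto
  thus ?thesis by (simp add: lessThan_Suc_atMost)
qed

lemma fw_abs_summable:
  assumes "\<sigma> \<in> conf d" "\<tau> \<in> conf d"
  shows "(\<lambda>w. norm (fw d h \<beta> w \<sigma> \<tau>)) summable_on {w. set w \<subseteq> E}"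
proof (rule nonneg_bdd_above_summable_on)
  let ?x = "\<bar>\<beta>\<bar> * Kb"
  let ?g = "\<lambda>w::'v set list. ?x ^ length w / fact (length w)"
  have x0: "?x \<ge> 0" using Kb_nonneg by simp
  show "bdd_above (sum (\<lambda>w. norm (fw d h \<beta> w \<sigma> \<tau>)) ` {F. F \<subseteq> {w. set w \<subseteq> E} \<and> finite F})"
  proof (rule bdd_aboveI2)
    fix F assume F: "F \<in> {F. F \<subseteq> {w. set w \<subseteq> E} \<and> finite F}"
    define N where "N = (\<Sum>w\<in>F. length w)"
    define W where "W = {w. set w \<subseteq> E \<and> length w \<le> N}"
    have fW: "finite W" unfolding W_def by (rule finite_lists_length_le[OF finite_E])
    have FW: "F \<subseteq> W" using F unfolding W_def N_def by (auto intro: member_le_sum)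
    have "(\<Sum>w\<in>F. norm (fw d h \<beta> w \<sigma> \<tau>)) \<le> (\<Sum>w\<in>F. ?g w)"
      using F by (intro sum_mono fw_bound assms) auto
    also have "\<dots> \<le> (\<Sum>w\<in>W. ?g w)" using FW fW x0 by (intro sum_mono2) auto
    also have "\<dots> = (\<Sum>n\<in>{..N}. \<Sum>w\<in>{w\<in>W. length w = n}. ?g w)"
      by (rule sum.group[symmetric]) (use fW in \<open>auto simp: W_def\<close>)
    also have "\<dots> = (\<Sum>n\<in>{..N}. real (card E) ^ n * (?x ^ n / fact n))"
    proof (rule sum.cong)
      fix n assume n: "n \<in> {..N}"
      have e: "{w\<in>W. length w = n} = {w. set w \<subseteq> E \<and> length w = n}" using n by (auto simp: W_def)
      show "(\<Sum>w\<in>{w\<in>W. length w = n}. ?g w) = real (card E) ^ n * (?x ^ n / fact n)"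
        unfolding e by (simp add: card_lists_length_eq[OF finite_E])
    qed simp
    also have "\<dots> = (\<Sum>n\<in>{..N}. (real (card E) * ?x) ^ n / fact n)" by (simp add: power_mult_distrib)
    also have "\<dots> \<le> exp (real (card E) * ?x)" by (rule exp_partial_bound) (use x0 in simp)
    finally show "(\<Sum>w\<in>F. norm (fw d h \<beta> w \<sigma> \<tau>)) \<le> exp (real (card E) * ?x)" .
  qed
qed simp

lemma fw_summable:
  assumes "\<sigma> \<in> conf d" "\<tau> \<in> conf d" "X \<subseteq> {w. set w \<subseteq> E}"
  shows "(\<lambda>w. fw d h \<beta> w \<sigma> \<tau>) summable_on X"
proof -
  have "(\<lambda>w. fw d h \<beta> w \<sigma> \<tau>) summable_on {w. set w \<subseteq> E}"
    using fw_abs_summable[OF assms(1,2)] by (rule abs_summable_summable)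
  thus ?thesis using assms(3) by (rule summable_on_subset)
qed

end


lemma has_sum_sum_fin:
  fixes f :: "'i \<Rightarrow> 'a \<Rightarrow> 'b::topological_comm_monoid_add"
  assumes "finite I" "\<And>i. i \<in> I \<Longrightarrow> (f i has_sum s i) A"
  shows "((\<lambda>x. \<Sum>i\<in>I. f i x) has_sum (\<Sum>i\<in>I. s i)) A"
  using assms
proof (induction I rule: finite_induct)
  case empty then show ?case by simp
next
  case (insert i I)
  then show ?case by (simp add: has_sum_add)
qed

lemma prod_summable:
  fixes f g :: "_ \<Rightarrow> complex"
  assumes "f summable_on A" "g summable_on B"
  shows "(\<lambda>(x,y). f x * g y) summable_on A \<times> B"
proof -
  have fa: "(\<lambda>x. norm (f x)) summable_on A" and ga: "(\<lambda>x. norm (g x)) summable_on B"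
    using assms summable_on_iff_abs_summable_on_complex by blast+
  have "(\<lambda>z. norm ((\<lambda>(x,y). f x * g y) z)) summable_on Sigma A (\<lambda>_. B)"
  proof (rule iffD2[OF Infinite_Sum.abs_summable_on_Sigma_iff], intro conjI ballI)
    fix x assume "x \<in> A"
    show "(\<lambda>y. norm ((\<lambda>(x,y). f x * g y) (x, y))) summable_on B"
      using summable_on_cmult_right[OF ga, of "norm (f x)"] by (simp add: norm_mult)
  next
    have "(\<lambda>x. norm (f x) * (\<Sum>\<^sub>\<infinity>y\<in>B. norm (g y))) summable_on A"
      using summable_on_cmult_left[OF fa] by simp
    moreover have "norm (\<Sum>\<^sub>\<infinity>y\<in>B. norm ((\<lambda>(x,y). f x * g y) (x, y))) = norm (f x) * (\<Sum>\<^sub>\<infinity>y\<in>B. norm (g y))" for x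
      by (simp add: norm_mult infsum_cmult_right' infsum_nonneg)
    ultimately show "(\<lambda>x. norm (\<Sum>\<^sub>\<infinity>y\<in>B. norm ((\<lambda>(x,y). f x * g y) (x, y)))) summable_on A"
      by simp
  qed
  thus ?thesis using summable_on_iff_abs_summable_on_complex by blast
qed

lemma prod_infsum:
  fixes f g :: "_ \<Rightarrow> complex"
  assumes "f summable_on A" "g summable_on B"
  shows "(\<Sum>\<^sub>\<infinity>(x,y)\<in>A \<times> B. f x * g y) = infsum f A * infsum g B"
proof -
  have "(\<Sum>\<^sub>\<infinity>(x,y)\<in>A \<times> B. f x * g y) = (\<Sum>\<^sub>\<infinity>x\<in>A. \<Sum>\<^sub>\<infinity>y\<in>B. f x * g y)"
    using infsum_Sigma'_banach[of "\<lambda>x y. f x * g y" A "\<lambda>_. B"] prod_summable[OF assms] by simp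
  also have "\<dots> = (\<Sum>\<^sub>\<infinity>x\<in>A. f x * infsum g B)" by (simp add: infsum_cmult_right')
  also have "\<dots> = infsum f A * infsum g B" by (simp add: infsum_cmult_left')
  finally show ?thesis .
qed

definition fib :: "'e set \<Rightarrow> 'e set \<Rightarrow> 'e list \<Rightarrow> 'e list \<Rightarrow> 'e list set" where
  "fib A B u v = {w. set w \<subseteq> A \<union> B \<and> filter (\<lambda>x. x \<in> A) w = u \<and> filter (\<lambda>x. x \<in> B) w = v}"

lemma fib_Nil_left:
  assumes "set v \<subseteq> B" "A \<inter> B = {}" shows "fib A B [] v = {v}"
proof -
  have "w = v" if "set w \<subseteq> A \<union> B" "filter (\<lambda>x. x \<in> A) w = []" "filter (\<lambda>x. x \<in> B) w = v" for w
  proof -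
    have "\<forall>x\<in>set w. x \<in> B" using that(1,2) by (auto simp: filter_empty_conv)
    hence "filter (\<lambda>x. x \<in> B) w = w" by simp
    thus ?thesis using that(3) by simp
  qed
  moreover have "filter (\<lambda>x. x \<in> A) v = []" using assms by (auto simp: filter_empty_conv)
  moreover have "filter (\<lambda>x. x \<in> B) v = v" using assms by (force intro!: filter_True)
  ultimately show ?thesis using assms unfolding fib_def by auto
qed

lemma fib_Nil_right:
  assumes "set u \<subseteq> A" "A \<inter> B = {}" shows "fib A B u [] = {u}"
proof -
  have "w = u" if "set w \<subseteq> A \<union> B" "filter (\<lambda>x. x \<in> B) w = []" "filter (\<lambda>x. x \<in> A) w = u" for w
  proof -
    have "\<forall>x\<in>set w. x \<in> A" using that(1,2) by (auto simp: filter_empty_conv)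
    hence "filter (\<lambda>x. x \<in> A) w = w" by simp
    thus ?thesis using that(3) by simp
  qed
  moreover have "filter (\<lambda>x. x \<in> B) u = []" using assms by (auto simp: filter_empty_conv)
  moreover have "filter (\<lambda>x. x \<in> A) u = u" using assms by (force intro!: filter_True)
  ultimately show ?thesis using assms unfolding fib_def by auto
qed

lemma fib_Cons:
  assumes "a \<in> A" "b \<in> B" "A \<inter> B = {}"
  shows "fib A B (a#u) (b#v) = (\<lambda>w. a#w) ` fib A B u (b#v) \<union> (\<lambda>w. b#w) ` fib A B (a#u) v"
proof
  show "fib A B (a#u) (b#v) \<subseteq> (\<lambda>w. a#w) ` fib A B u (b#v) \<union> (\<lambda>w. b#w) ` fib A B (a#u) v"
  proof
    fix w assume w: "w \<in> fib A B (a#u) (b#v)"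
    then obtain x w' where wx: "w = x # w'" 
      unfolding fib_def by (cases w) auto
    show "w \<in> (\<lambda>w. a#w) ` fib A B u (b#v) \<union> (\<lambda>w. b#w) ` fib A B (a#u) v"
    proof (cases "x \<in> A")
      case True
      hence "x \<notin> B" using assms by auto
      with True w wx have "x = a" "w' \<in> fib A B u (b#v)" unfolding fib_def by auto
      thus ?thesis using wx by auto
    next
      case False
      hence "x \<in> B" using w wx unfolding fib_def by auto
      with False w wx have "x = b" "w' \<in> fib A B (a#u) v" unfolding fib_def by auto
      thus ?thesis using wx by auto
    qed
  qed
next
  show "(\<lambda>w. a#w) ` fib A B u (b#v) \<union> (\<lambda>w. b#w) ` fib A B (a#u) v \<subseteq> fib A B (a#u) (b#v)"
    using assms unfolding fib_def by auto
qed

lemma card_fib: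
  assumes "set u \<subseteq> A" "set v \<subseteq> B" "A \<inter> B = {}"
  shows "card (fib A B u v) = (length u + length v) choose (length u)"
  using assms
proof (induction "length u + length v" arbitrary: u v rule: less_induct)
  case less
  show ?case
  proof (cases u)
    case Nil then show ?thesis using less.prems by (simp add: fib_Nil_left)
  next
    case (Cons a u')
    show ?thesis
    proof (cases v)
      case Nil then show ?thesis using less.prems by (simp add: fib_Nil_right)
    next
      case (Cons b v')
      have a: "a \<in> A" and b: "b \<in> B" using less.prems \<open>u = a#u'\<close> \<open>v = b#v'\<close> by auto
      have c1: "card (fib A B u' (b#v')) = (length u' + length (b#v')) choose (length u')"
        using less.prems \<open>u = a#u'\<close> \<open>v = b#v'\<close> by (intro less.hyps) auto
      have c2: "card (fib A B (a#u') v') = (length (a#u') + length v') choose (length (a#u'))"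
        using less.prems \<open>u = a#u'\<close> \<open>v = b#v'\<close> by (intro less.hyps) auto
      have f1: "finite (fib A B u' (b#v'))" using c1 by (intro card_ge_0_finite) simp
      have f2: "finite (fib A B (a#u') v')" using c2 by (intro card_ge_0_finite) simp
      have disj: "(\<lambda>w. a#w) ` fib A B u' (b#v') \<inter> (\<lambda>w. b#w) ` fib A B (a#u') v' = {}"
        using a b less.prems(3) by auto
      have "card (fib A B u v) = card ((\<lambda>w. a#w) ` fib A B u' (b#v')) + card ((\<lambda>w. b#w) ` fib A B (a#u') v')"
        unfolding \<open>u = a#u'\<close> \<open>v = b#v'\<close> fib_Cons[OF a b less.prems(3)]
        using f1 f2 disj by (intro card_Un_disjoint) auto
      also have "\<dots> = card (fib A B u' (b#v')) + card (fib A B (a#u') v')"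
        by (simp add: card_image)
      also have "\<dots> = (length u + length v) choose (length u)"
        unfolding c1 c2 \<open>u = a#u'\<close> \<open>v = b#v'\<close> by simp
      finally show ?thesis .
    qed
  qed
qed

lemma finite_fib:
  assumes "set u \<subseteq> A" "set v \<subseteq> B" "A \<inter> B = {}"
  shows "finite (fib A B u v)"
  using card_fib[OF assms] by (intro card_ge_0_finite) simp



context qsys begin

definition WS :: "'v set set \<Rightarrow> 'v set set \<Rightarrow> 'v set list set" where
  "WS X Y = {w. set w \<subseteq> X \<and> Y \<subseteq> set w}"

definition Sop :: "'v set set \<Rightarrow> 'v set set \<Rightarrow> 'v qop" where
  "Sop X Y = (\<lambda>\<sigma> \<tau>. \<Sum>\<^sub>\<infinity>w\<in>WS X Y. fw d h \<beta> w \<sigma> \<tau>)"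

definition cc :: "nat \<Rightarrow> complex" where
  "cc n = (- complex_of_real \<beta>) ^ n / of_nat (fact n)"

lemma fw_cc: "fw d h \<beta> w = opscale (cc (length w)) (wordop d h w)"
  by (simp add: fw_def cc_def)

lemma cc_binom: "of_nat ((k + j) choose k) * cc (k + j) = cc k * cc j"
proof -
  have "fact k * fact j * ((k + j) choose k) = fact (k + j)"
    using binomial_fact_lemma[of k "k+j"] by simp
  hence e: "(of_nat (fact k) :: complex) * of_nat (fact j) * of_nat ((k + j) choose k) = of_nat (fact (k+j))"
    by (metis of_nat_mult)
  have nz: "(of_nat (fact n) :: complex) \<noteq> 0" for n by simp
  show ?thesis unfolding cc_def using e nz[of k] nz[of j] nz[of "k+j"]
    by (simp add: field_simps power_add)
qed

lemma WS_words: "X \<subseteq> E \<Longrightarrow> WS X Y \<subseteq> {w. set w \<subseteq> E}"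
  unfolding WS_def by auto

lemma split:
  assumes AB: "A \<union> B \<subseteq> E" and no: "non_overlapping A B" and A': "A' \<subseteq> A" and B': "B' \<subseteq> B"
  shows "eqc d (Sop (A \<union> B) (A' \<union> B')) (opmult d (Sop A A') (Sop B B'))"
  unfolding eqc_def
proof (intro ballI)
  fix \<sigma> \<tau> assume s: "\<sigma> \<in> conf d" and t: "\<tau> \<in> conf d"
  define U where "U = WS A A'"
  define V where "V = WS B B'"
  define W where "W = WS (A \<union> B) (A' \<union> B')"
  have disj: "A \<inter> B = {}" using AB no nonempty unfolding non_overlapping_def by fastforce
  have UE: "U \<subseteq> {w. set w \<subseteq> E}" and VE: "V \<subseteq> {w. set w \<subseteq> E}" and WE: "W \<subseteq> {w. set w \<subseteq> E}"
    unfolding U_def V_def W_def using AB by (auto intro!: WS_words)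
  define X where "X = (\<lambda>u v. opmult d (wordop d h u) (wordop d h v) \<sigma> \<tau>)"
  define FB where "FB = (\<lambda>p. fib A B (fst p) (snd p))"
  have sumU: "(\<lambda>u. fw d h \<beta> u \<sigma> \<rho>) summable_on U" if "\<rho> \<in> conf d" for \<rho>
    using fw_summable[OF s that UE] .
  have sumV: "(\<lambda>v. fw d h \<beta> v \<rho> \<tau>) summable_on V" if "\<rho> \<in> conf d" for \<rho>
    using fw_summable[OF that t VE] .
  have "opmult d (Sop A A') (Sop B B') \<sigma> \<tau> =
      (\<Sum>\<rho>\<in>conf d. (\<Sum>\<^sub>\<infinity>u\<in>U. fw d h \<beta> u \<sigma> \<rho>) * (\<Sum>\<^sub>\<infinity>v\<in>V. fw d h \<beta> v \<rho> \<tau>))"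
    by (simp add: opmult_def Sop_def U_def V_def)
  also have "\<dots> = (\<Sum>\<rho>\<in>conf d. \<Sum>\<^sub>\<infinity>(u,v)\<in>U \<times> V. fw d h \<beta> u \<sigma> \<rho> * fw d h \<beta> v \<rho> \<tau>)"
    by (intro sum.cong refl prod_infsum[symmetric] sumU sumV)
  also have "\<dots> = (\<Sum>\<^sub>\<infinity>(u,v)\<in>U \<times> V. \<Sum>\<rho>\<in>conf d. fw d h \<beta> u \<sigma> \<rho> * fw d h \<beta> v \<rho> \<tau>)"
  proof -
    have "((\<lambda>p. \<Sum>\<rho>\<in>conf d. (\<lambda>(u,v). fw d h \<beta> u \<sigma> \<rho> * fw d h \<beta> v \<rho> \<tau>) p) has_sum
        (\<Sum>\<rho>\<in>conf d. \<Sum>\<^sub>\<infinity>(u,v)\<in>U \<times> V. fw d h \<beta> u \<sigma> \<rho> * fw d h \<beta> v \<rho> \<tau>)) (U \<times> V)"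
      by (intro has_sum_sum_fin finite_conf has_sum_infsum prod_summable sumU sumV)
    hence "(\<Sum>\<^sub>\<infinity>p\<in>U \<times> V. \<Sum>\<rho>\<in>conf d. (\<lambda>(u,v). fw d h \<beta> u \<sigma> \<rho> * fw d h \<beta> v \<rho> \<tau>) p) =
        (\<Sum>\<rho>\<in>conf d. \<Sum>\<^sub>\<infinity>(u,v)\<in>U \<times> V. fw d h \<beta> u \<sigma> \<rho> * fw d h \<beta> v \<rho> \<tau>)"
      by (rule infsumI)
    thus ?thesis by (simp add: case_prod_unfold)
  qed
  also have "\<dots> = (\<Sum>\<^sub>\<infinity>(u,v)\<in>U \<times> V. cc (length u) * cc (length v) * X u v)"
    by (intro infsum_cong) (auto simp: fw_cc opmult_scale[symmetric] X_def opscale_def opmult_def sum_distrib_left mult_ac)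
  also have "\<dots> = (\<Sum>\<^sub>\<infinity>p\<in>U \<times> V. \<Sum>w\<in>FB p. fw d h \<beta> w \<sigma> \<tau>)"
  proof (intro infsum_cong)
    fix p assume p: "p \<in> U \<times> V"
    obtain u v where uv: "p = (u, v)" by (cases p)
    have su: "set u \<subseteq> A" and sv: "set v \<subseteq> B" using p uv by (auto simp: U_def V_def WS_def)
    have "fw d h \<beta> w \<sigma> \<tau> = cc (length u + length v) * X u v" if w: "w \<in> fib A B u v" for w
    proof -
      have sw: "set w \<subseteq> A \<union> B" and fa: "filter (\<lambda>x. x \<in> A) w = u" and fb: "filter (\<lambda>x. x \<in> B) w = v"
        using w by (auto simp: fib_def)
      have "filter (\<lambda>x. x \<in> B) w = filter (\<lambda>x. \<not> x \<in> A) w"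
        using sw disj by (intro filter_cong) auto
      hence len: "length w = length u + length v"
        using sum_length_filter_compl[of "\<lambda>x. x \<in> A" w] fa fb by simp
      have "wordop d h w \<sigma> \<tau> = X u v"
        using word_split[OF sw AB no] s t fa fb unfolding eqc_def X_def by auto
      thus ?thesis by (simp add: fw_cc opscale_def len)
    qed
    hence "(\<Sum>w\<in>FB p. fw d h \<beta> w \<sigma> \<tau>) = of_nat (card (fib A B u v)) * (cc (length u + length v) * X u v)"
      by (simp add: FB_def uv)
    also have "\<dots> = cc (length u) * cc (length v) * X u v"
      by (simp add: card_fib[OF su sv disj] mult.assoc[symmetric] cc_binom)
    finally show "(case p of (u, v) \<Rightarrow> cc (length u) * cc (length v) * X u v) = (\<Sum>w\<in>FB p. fw d h \<beta> w \<sigma> \<tau>)"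
      by (simp add: uv)
  qed
  also have "\<dots> = (\<Sum>\<^sub>\<infinity>w\<in>W. fw d h \<beta> w \<sigma> \<tau>)"
  proof -
    define g where "g = (\<lambda>w. ((filter (\<lambda>x. x \<in> A) w, filter (\<lambda>x. x \<in> B) w), w))"
    have bij: "bij_betw g W (Sigma (U \<times> V) FB)"
    proof (rule bij_betwI')
      show "\<And>x y. x \<in> W \<Longrightarrow> y \<in> W \<Longrightarrow> (g x = g y) = (x = y)" by (auto simp: g_def)
      show "\<And>x. x \<in> W \<Longrightarrow> g x \<in> Sigma (U \<times> V) FB"
        using A' B' by (auto simp: g_def W_def U_def V_def WS_def FB_def fib_def)
      show "\<exists>x\<in>W. y = g x" if "y \<in> Sigma (U \<times> V) FB" for y
      proof -
        obtain u v w where y: "y = ((u, v), w)" by (metis prod.collapse)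
        have "w \<in> W" "y = g w" using that A' B' y
          by (auto simp: g_def W_def U_def V_def WS_def FB_def fib_def)
        thus ?thesis by blast
      qed
    qed
    have sW: "(\<lambda>w. fw d h \<beta> w \<sigma> \<tau>) summable_on W" by (rule fw_summable[OF s t WE])
    have sS: "(\<lambda>(p, w). fw d h \<beta> w \<sigma> \<tau>) summable_on Sigma (U \<times> V) FB"
      using summable_on_reindex_bij_betw[OF bij, of "\<lambda>(p, w). fw d h \<beta> w \<sigma> \<tau>"] sW
      by (simp add: g_def)
    have fin: "finite (FB p)" if "p \<in> U \<times> V" for p
      using that disj by (auto simp: FB_def U_def V_def WS_def intro!: finite_fib)
    have "(\<Sum>\<^sub>\<infinity>p\<in>U \<times> V. \<Sum>w\<in>FB p. fw d h \<beta> w \<sigma> \<tau>) = (\<Sum>\<^sub>\<infinity>p\<in>U \<times> V. \<Sum>\<^sub>\<infinity>w\<in>FB p. fw d h \<beta> w \<sigma> \<tau>)"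
      using fin by (intro infsum_cong) simp
    also have "\<dots> = (\<Sum>\<^sub>\<infinity>(p, w)\<in>Sigma (U \<times> V) FB. fw d h \<beta> w \<sigma> \<tau>)"
      using infsum_Sigma'_banach[of "\<lambda>p w. fw d h \<beta> w \<sigma> \<tau>" "U \<times> V" FB] sS by simp
    also have "\<dots> = (\<Sum>\<^sub>\<infinity>w\<in>W. fw d h \<beta> w \<sigma> \<tau>)"
      using infsum_reindex_bij_betw[OF bij, of "\<lambda>(p, w). fw d h \<beta> w \<sigma> \<tau>"] by (simp add: g_def)
    finally show ?thesis .
  qed
  also have "\<dots> = Sop (A \<union> B) (A' \<union> B') \<sigma> \<tau>" by (simp add: Sop_def W_def)
  finally show "Sop (A \<union> B) (A' \<union> B') \<sigma> \<tau> = opmult d (Sop A A') (Sop B B') \<sigma> \<tau>" by simp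
qed

end


context qsys begin

definition Wn :: "'v set set \<Rightarrow> nat \<Rightarrow> 'v set list set" where
  "Wn R n = {w. set w \<subseteq> R \<and> length w = n}"

lemma oppow_expand:
  assumes R: "R \<subseteq> E"
  shows "eqc d (oppow d (opscale (- complex_of_real \<beta>) (opsum R h)) n)
           (\<lambda>\<sigma> \<tau>. \<Sum>w\<in>Wn R n. (- complex_of_real \<beta>) ^ n * wordop d h w \<sigma> \<tau>)"
proof (induction n)
  case 0
  have "Wn R 0 = {[]}" by (auto simp: Wn_def)
  then show ?case by simp
next
  case (Suc n)
  let ?X = "opscale (- complex_of_real \<beta>) (opsum R h)"
  let ?c = "- complex_of_real \<beta>"
  have fR: "finite R" using R finite_E finite_subset by blast
  have fW: "finite (Wn R n)" unfolding Wn_def by (rule finite_lists_length_eq[OF fR])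
  have "eqc d (oppow d ?X (Suc n)) (opmult d ?X (\<lambda>\<sigma> \<tau>. \<Sum>w\<in>Wn R n. ?c ^ n * wordop d h w \<sigma> \<tau>))"
    using Suc by (simp add: opmult_cong[OF eqc_refl])
  moreover have "opmult d ?X (\<lambda>\<sigma> \<tau>. \<Sum>w\<in>Wn R n. ?c ^ n * wordop d h w \<sigma> \<tau>) \<sigma> \<tau> =
      (\<Sum>w\<in>Wn R (Suc n). ?c ^ Suc n * wordop d h w \<sigma> \<tau>)" for \<sigma> \<tau>
  proof -
    have "opmult d ?X (\<lambda>\<sigma> \<tau>. \<Sum>w\<in>Wn R n. ?c ^ n * wordop d h w \<sigma> \<tau>) \<sigma> \<tau> =
        (\<Sum>\<rho>\<in>conf d. (?c * (\<Sum>r\<in>R. h r \<sigma> \<rho>)) * (\<Sum>w\<in>Wn R n. ?c ^ n * wordop d h w \<rho> \<tau>))"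
      by (simp add: opmult_def opscale_def opsum_def)
    also have "\<dots> = (\<Sum>\<rho>\<in>conf d. \<Sum>r\<in>R. \<Sum>w\<in>Wn R n. ?c ^ Suc n * (h r \<sigma> \<rho> * wordop d h w \<rho> \<tau>))"
      apply (simp add: sum_distrib_left sum_distrib_right mult_ac)
      apply (rule sum.cong[OF refl])
      apply (rule sum.swap)
      done
    also have "\<dots> = (\<Sum>r\<in>R. \<Sum>w\<in>Wn R n. ?c ^ Suc n * (\<Sum>\<rho>\<in>conf d. h r \<sigma> \<rho> * wordop d h w \<rho> \<tau>))"
      by (subst sum.swap) (simp add: sum.swap[of _ "conf d"] sum_distrib_left)
    also have "\<dots> = (\<Sum>(r, w)\<in>R \<times> Wn R n. ?c ^ Suc n * wordop d h (r # w) \<sigma> \<tau>)"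
      by (simp add: sum.cartesian_product opmult_def)
    also have "\<dots> = (\<Sum>(w, r)\<in>Wn R n \<times> R. ?c ^ Suc n * wordop d h (r # w) \<sigma> \<tau>)"
      unfolding sum.cartesian_product[symmetric] by (rule sum.swap)
    also have "\<dots> = (\<Sum>w\<in>Wn R (Suc n). ?c ^ Suc n * wordop d h w \<sigma> \<tau>)"
    proof -
      have "Wn R (Suc n) = (\<lambda>(xs, n). n#xs) ` (Wn R n \<times> R)"
        unfolding Wn_def by (rule lists_length_Suc_eq)
      moreover have "inj_on (\<lambda>(xs, n). n#xs) (Wn R n \<times> R)" by (auto simp: inj_on_def)
      ultimately show ?thesis by (simp add: sum.reindex case_prod_unfold)
    qed
    finally show ?thesis .
  qed
  ultimately show ?case unfolding eqc_def by simp
qed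

lemma exp_Sop:
  assumes R: "R \<subseteq> E"
  shows "eqc d (opexp d (opscale (- complex_of_real \<beta>) (opsum R h))) (Sop R {})"
  unfolding eqc_def
proof (intro ballI)
  fix \<sigma> \<tau> assume s: "\<sigma> \<in> conf d" and t: "\<tau> \<in> conf d"
  let ?X = "opscale (- complex_of_real \<beta>) (opsum R h)"
  have fR: "finite R" using R finite_E finite_subset by blast
  have fW: "finite (Wn R n)" for n unfolding Wn_def by (rule finite_lists_length_eq[OF fR])
  define WR where "WR = {w. set w \<subseteq> R}"
  have WRE: "WR \<subseteq> {w. set w \<subseteq> E}" using R by (auto simp: WR_def)
  have sW: "(\<lambda>w. fw d h \<beta> w \<sigma> \<tau>) summable_on WR" by (rule fw_summable[OF s t WRE])
  have bij: "bij_betw (\<lambda>w. (length w, w)) WR (Sigma UNIV (Wn R))"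
    by (rule bij_betwI') (auto simp: WR_def Wn_def)
  have hS: "((\<lambda>(n, w). fw d h \<beta> w \<sigma> \<tau>) has_sum (\<Sum>\<^sub>\<infinity>w\<in>WR. fw d h \<beta> w \<sigma> \<tau>)) (Sigma UNIV (Wn R))"
  proof -
    have "((\<lambda>w. fw d h \<beta> w \<sigma> \<tau>) has_sum (\<Sum>\<^sub>\<infinity>w\<in>WR. fw d h \<beta> w \<sigma> \<tau>)) WR"
      using sW by (rule has_sum_infsum)
    thus ?thesis
      using has_sum_reindex_bij_betw[OF bij, of "\<lambda>(n, w). fw d h \<beta> w \<sigma> \<tau>"] by simp
  qed
  have "((\<lambda>n. \<Sum>w\<in>Wn R n. fw d h \<beta> w \<sigma> \<tau>) has_sum (\<Sum>\<^sub>\<infinity>w\<in>WR. fw d h \<beta> w \<sigma> \<tau>)) UNIV"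
    by (rule has_sum_Sigma'[OF hS]) (use fW in simp)
  hence sums: "(\<lambda>n. \<Sum>w\<in>Wn R n. fw d h \<beta> w \<sigma> \<tau>) sums (\<Sum>\<^sub>\<infinity>w\<in>WR. fw d h \<beta> w \<sigma> \<tau>)"
    by (rule has_sum_imp_sums)
  have "oppow d ?X n \<sigma> \<tau> / of_nat (fact n) = (\<Sum>w\<in>Wn R n. fw d h \<beta> w \<sigma> \<tau>)" for n
  proof -
    have "oppow d ?X n \<sigma> \<tau> = (\<Sum>w\<in>Wn R n. (- complex_of_real \<beta>) ^ n * wordop d h w \<sigma> \<tau>)"
      using oppow_expand[OF R, of n] s t unfolding eqc_def by auto
    thus ?thesis
      by (simp add: fw_def opscale_def sum_divide_distrib Wn_def)
  qed
  hence "opexp d ?X \<sigma> \<tau> = (\<Sum>n. \<Sum>w\<in>Wn R n. fw d h \<beta> w \<sigma> \<tau>)"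
    by (simp add: opexp_def)
  also have "\<dots> = (\<Sum>\<^sub>\<infinity>w\<in>WR. fw d h \<beta> w \<sigma> \<tau>)" using sums by (rule sums_unique[symmetric])
  also have "\<dots> = Sop R {} \<sigma> \<tau>" by (simp add: Sop_def WS_def WR_def)
  finally show "opexp d ?X \<sigma> \<tau> = Sop R {} \<sigma> \<tau>" .
qed

end


definition erel :: "'v set set \<Rightarrow> ('v set \<times> 'v set) set" where
  "erel G = {(x, y). x \<in> G \<and> y \<in> G \<and> x \<inter> y \<noteq> {}}"

lemma connected_erel: "connected_edges G \<longleftrightarrow> (\<forall>a\<in>G. \<forall>b\<in>G. (a, b) \<in> (erel G)\<^sup>*)"
  unfolding connected_edges_def erel_def by simp

lemma erel_mono: "A \<subseteq> B \<Longrightarrow> (erel A)\<^sup>* \<subseteq> (erel B)\<^sup>*"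
  by (rule rtrancl_mono) (auto simp: erel_def)

lemma conn_union:
  assumes "connected_edges A" "connected_edges B" "x \<in> A" "x \<in> B"
  shows "connected_edges (A \<union> B)"
  unfolding connected_erel
proof (intro ballI)
  fix a b assume a: "a \<in> A \<union> B" and b: "b \<in> A \<union> B"
  have mA: "(erel A)\<^sup>* \<subseteq> (erel (A \<union> B))\<^sup>*" and mB: "(erel B)\<^sup>* \<subseteq> (erel (A \<union> B))\<^sup>*"
    by (rule erel_mono, simp)+
  have "(a, x) \<in> (erel (A \<union> B))\<^sup>*"
    using a assms mA mB unfolding connected_erel by blast
  moreover have "(x, b) \<in> (erel (A \<union> B))\<^sup>*"
    using b assms mA mB unfolding connected_erel by blast
  ultimately show "(a, b) \<in> (erel (A \<union> B))\<^sup>*" by (rule rtrancl_trans)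
qed

lemma conn_pair:
  assumes "l \<inter> l' \<noteq> {}" shows "connected_edges {l, l'}"
  unfolding connected_erel
proof (intro ballI)
  fix a b assume "a \<in> {l, l'}" "b \<in> {l, l'}"
  moreover have "(l, l') \<in> erel {l, l'}" "(l', l) \<in> erel {l, l'}" using assms by (auto simp: erel_def)
  ultimately show "(a, b) \<in> (erel {l, l'})\<^sup>*" by auto
qed

lemma conn_insert:
  assumes "connected_edges A" "l' \<in> A" "l \<inter> l' \<noteq> {}"
  shows "connected_edges (insert l A)"
proof -
  have "connected_edges (A \<union> {l, l'})"
    by (rule conn_union[of _ _ l']) (use assms conn_pair[OF assms(3)] in auto)
  moreover have "A \<union> {l, l'} = insert l A" using assms by auto
  ultimately show ?thesis by simp
qed

lemma comp_max: "C \<in> edge_components W \<Longrightarrow> C \<subseteq> C' \<Longrightarrow> C' \<subseteq> W \<Longrightarrow> connected_edges C' \<Longrightarrow> C' = C"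
  unfolding edge_components_def by blast

lemma comp_props: "C \<in> edge_components W \<Longrightarrow> C \<subseteq> W \<and> C \<noteq> {} \<and> connected_edges C"
  unfolding edge_components_def by blast

definition validS :: "'v set set \<Rightarrow> 'v set set set \<Rightarrow> bool" where
  "validS E S \<longleftrightarrow> (\<forall>C\<in>S. C \<noteq> {} \<and> connected_edges C \<and> C \<subseteq> E) \<and> pairwise non_overlapping S"

lemma comp_char_if:
  assumes v: "validS E S" and W: "W \<subseteq> E"
    and h1: "\<Union>S \<subseteq> W" and h2: "W \<subseteq> \<Union>S \<union> (E - edge_closure E (\<Union>S))"
  shows "S \<subseteq> edge_components W"
proof
  fix C assume C: "C \<in> S"
  have Cn: "C \<noteq> {}" and Cc: "connected_edges C" using v C by (auto simp: validS_def)
  have "C' = C" if C': "C \<subseteq> C'" "C' \<subseteq> W" "connected_edges C'" for C'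
  proof
    show "C' \<subseteq> C"
    proof
      fix x assume x: "x \<in> C'"
      obtain a where a: "a \<in> C" using Cn by blast
      have "(a, x) \<in> (erel C')\<^sup>*" using C' x a unfolding connected_erel by blast
      then show "x \<in> C"
      proof (induction rule: rtrancl_induct)
        case base then show ?case using a .
      next
        case (step y z)
        have yz: "y \<inter> z \<noteq> {}" "z \<in> C'" using step.hyps(2) by (auto simp: erel_def)
        have zW: "z \<in> W" using yz C' by auto
        have "z \<in> \<Union>S"
        proof (rule ccontr)
          assume "z \<notin> \<Union>S"
          hence "z \<in> E - edge_closure E (\<Union>S)" using zW h2 by auto
          moreover have "z \<in> edge_closure E (\<Union>S)"
            using zW W yz step.IH C unfolding edge_closure_def by blast
          ultimately show False by simp
        qed
        then obtain C'' where C'': "C'' \<in> S" "z \<in> C''" by blast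
        show "z \<in> C"
        proof (rule ccontr)
          assume "z \<notin> C"
          hence "C'' \<noteq> C" using C'' by auto
          hence "non_overlapping C C''" using v C C'' by (auto simp: validS_def pairwise_def)
          thus False using step.IH C''(2) yz(1) unfolding non_overlapping_def by auto
        qed
      qed
    qed
  qed (use that in auto)
  thus "C \<in> edge_components W"
    unfolding edge_components_def using Cn Cc C h1 by auto
qed

lemma comp_char_only_if:
  assumes SW: "S \<subseteq> edge_components W" and W: "W \<subseteq> E"
  shows "\<Union>S \<subseteq> W \<and> W \<subseteq> \<Union>S \<union> (E - edge_closure E (\<Union>S))"
proof
  show "\<Union>S \<subseteq> W" using SW comp_props by blast
  show "W \<subseteq> \<Union>S \<union> (E - edge_closure E (\<Union>S))"
  proof
    fix l assume l: "l \<in> W"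
    show "l \<in> \<Union>S \<union> (E - edge_closure E (\<Union>S))"
    proof (rule ccontr)
      assume "\<not> ?thesis"
      then have nl: "l \<notin> \<Union>S" and cl: "l \<in> edge_closure E (\<Union>S)" using l W by auto
      then obtain l' C where C: "C \<in> S" "l' \<in> C" "l \<inter> l' \<noteq> {}" unfolding edge_closure_def by auto
      have Cc: "C \<in> edge_components W" using C SW by auto
      hence "connected_edges (insert l C)" using C comp_props[OF Cc] by (intro conn_insert) auto
      moreover have "insert l C \<subseteq> W" using comp_props[OF Cc] l by blast
      ultimately have "insert l C = C" using Cc by (intro comp_max) auto
      thus False using nl C by auto
    qed
  qed
qed

lemma comps_pairwise:
  "pairwise non_overlapping (edge_components W)"
  unfolding pairwise_def
proof (intro ballI impI)
  fix C1 C2 assume C1: "C1 \<in> edge_components W" and C2: "C2 \<in> edge_components W" and ne: "C1 \<noteq> C2"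
  show "non_overlapping C1 C2"
    unfolding non_overlapping_def
  proof (intro ballI, rule ccontr)
    fix a b assume a: "a \<in> C1" and b: "b \<in> C2" and ab: "a \<inter> b \<noteq> {}"
    have "connected_edges (insert b C1)"
      using C1 a ab by (intro conn_insert[of _ a]) (use comp_props[OF C1] in \<open>auto simp: Int_commute\<close>)
    hence cu: "connected_edges (insert b C1 \<union> C2)"
      using C2 b comp_props[OF C2] by (intro conn_union[of _ _ b]) auto
    have sub: "insert b C1 \<union> C2 \<subseteq> W" using comp_props[OF C1] comp_props[OF C2] b by blast
    have "insert b C1 \<union> C2 = C1" using C1 cu sub by (intro comp_max) auto
    moreover have "insert b C1 \<union> C2 = C2" using C2 cu sub by (intro comp_max) auto
    ultimately show False using ne by simp
  qed
qed

lemma comps_valid: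
  assumes "W \<subseteq> E" shows "validS E (edge_components W)"
  using assms comps_pairwise comp_props unfolding validS_def by blast

lemma comps_union:
  assumes v: "validS E S"
  shows "edge_components (\<Union>S) = S"
proof
  have SE: "\<Union>S \<subseteq> E" using v by (auto simp: validS_def)
  show "S \<subseteq> edge_components (\<Union>S)" by (rule comp_char_if[OF v SE]) auto
  show "edge_components (\<Union>S) \<subseteq> S"
  proof
    fix D assume D: "D \<in> edge_components (\<Union>S)"
    then obtain x where x: "x \<in> D" using comp_props by blast
    then obtain C where C: "C \<in> S" "x \<in> C" using D comp_props by blast
    have Cc: "C \<in> edge_components (\<Union>S)" using C \<open>S \<subseteq> edge_components (\<Union>S)\<close> by auto
    have cu: "connected_edges (D \<union> C)"
      using x C comp_props[OF D] comp_props[OF Cc] by (intro conn_union[of _ _ x]) auto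
    have sub: "D \<union> C \<subseteq> \<Union>S" using comp_props[OF D] comp_props[OF Cc] by blast
    have "D \<union> C = D" using D cu sub by (intro comp_max) auto
    moreover have "D \<union> C = C" using Cc cu sub by (intro comp_max) auto
    ultimately show "D \<in> S" using C by simp
  qed
qed



context qsys begin

lemma Sop_empty: "eqc d (Sop {} {}) opid"
proof -
  have "WS {} {} = {[]}" by (auto simp: WS_def)
  thus ?thesis by (simp add: eqc_def Sop_def fw_cc cc_def opscale_def)
qed

lemma eta_Sop: "eta d h \<beta> C = Sop C C"
  by (simp add: eta_def Sop_def WS_def)

lemma eta_fun: "eta d h \<beta> = (\<lambda>C. Sop C C)"
  by (rule ext) (simp add: eta_Sop)

lemma foldr_eta:
  assumes "distinct cs" "set cs \<subseteq> S" "validS E S"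
  shows "eqc d (foldr (opmult d) (map (eta d h \<beta>) cs) opid) (Sop (\<Union>(set cs)) (\<Union>(set cs)))"
  using assms(1,2)
proof (induction cs)
  case Nil then show ?case by (simp add: eqc_sym[OF Sop_empty])
next
  case (Cons C cs)
  let ?U = "\<Union>(set cs)"
  have CS: "C \<in> S" and csS: "set cs \<subseteq> S" and Cn: "C \<notin> set cs" using Cons.prems by auto
  have CE: "C \<union> ?U \<subseteq> E" using Cons.prems assms(3) by (auto simp: validS_def)
  have no: "non_overlapping C ?U"
    unfolding non_overlapping_def
  proof (intro ballI)
    fix a b assume a: "a \<in> C" and b: "b \<in> ?U"
    then obtain C' where C': "C' \<in> set cs" "b \<in> C'" by auto
    have "C' \<noteq> C" using C' Cn by auto
    hence "non_overlapping C C'" using assms(3) CS C' csS unfolding validS_def pairwise_def by blast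
    thus "a \<inter> b = {}" using a C' unfolding non_overlapping_def by auto
  qed
  have "eqc d (foldr (opmult d) (map (eta d h \<beta>) (C#cs)) opid) (opmult d (Sop C C) (Sop ?U ?U))"
    using Cons by (simp add: eta_fun opmult_cong[OF eqc_refl])
  also have "eqc d \<dots> (Sop (C \<union> ?U) (C \<union> ?U))"
    by (rule eqc_sym, rule split[OF CE no]) auto
  finally show ?case by simp
qed

lemma rho_core:
  assumes v: "validS E S" and s: "\<sigma> \<in> conf d" and t: "\<tau> \<in> conf d"
  shows "rhoG d h \<beta> E (\<Union>S) \<sigma> \<tau> = (\<Sum>\<^sub>\<infinity>w\<in>{w. set w \<subseteq> E \<and> S \<subseteq> edge_components (set w)}. fw d h \<beta> w \<sigma> \<tau>)"
proof -
  define G where "G = \<Union>S"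
  define R where "R = E - edge_closure E G"
  have GE: "G \<subseteq> E" using v by (auto simp: validS_def G_def)
  have RE: "R \<subseteq> E" by (auto simp: R_def)
  have cG: "edge_components G = S" unfolding G_def by (rule comps_union[OF v])
  have fS: "finite S"
  proof (rule finite_subset)
    show "S \<subseteq> Pow E" using v by (auto simp: validS_def)
  qed (use finite_E in simp)
  define cs where "cs = (SOME cs. distinct cs \<and> set cs = edge_components G)"
  have cs: "distinct cs \<and> set cs = S"
    unfolding cs_def cG by (rule someI_ex) (use finite_distinct_list[OF fS] in blast)
  have no: "non_overlapping R G"
    unfolding non_overlapping_def R_def edge_closure_def by auto
  have "eqc d (rhoG d h \<beta> E G) (opmult d (Sop R {}) (Sop G G))"
    unfolding rhoG_def R_def[symmetric] cs_def[symmetric]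
  proof (rule opmult_cong)
    show "eqc d (opexp d (opscale (- complex_of_real \<beta>) (opsum R h))) (Sop R {})" by (rule exp_Sop[OF RE])
    show "eqc d (foldr (opmult d) (map (eta d h \<beta>) cs) opid) (Sop G G)"
      using foldr_eta[of cs S] cs v unfolding G_def by simp
  qed
  also have "eqc d \<dots> (Sop (R \<union> G) ({} \<union> G))"
    by (rule eqc_sym, rule split) (use RE GE no in auto)
  finally have e: "rhoG d h \<beta> E G \<sigma> \<tau> = Sop (R \<union> G) G \<sigma> \<tau>" using s t unfolding eqc_def by simp
  have "WS (R \<union> G) G = {w. set w \<subseteq> E \<and> S \<subseteq> edge_components (set w)}"
  proof (intro set_eqI iffI)
    fix w assume "w \<in> WS (R \<union> G) G"
    hence w: "set w \<subseteq> R \<union> G" "G \<subseteq> set w" by (auto simp: WS_def)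
    have wE: "set w \<subseteq> E" using w RE GE by auto
    have "S \<subseteq> edge_components (set w)"
      by (rule comp_char_if[OF v wE]) (use w in \<open>auto simp: G_def R_def\<close>)
    thus "w \<in> {w. set w \<subseteq> E \<and> S \<subseteq> edge_components (set w)}" using wE by simp
  next
    fix w assume "w \<in> {w. set w \<subseteq> E \<and> S \<subseteq> edge_components (set w)}"
    hence wE: "set w \<subseteq> E" and Sw: "S \<subseteq> edge_components (set w)" by auto
    from comp_char_only_if[OF Sw wE] show "w \<in> WS (R \<union> G) G"
      by (auto simp: WS_def G_def R_def)
  qed
  thus ?thesis using e by (simp add: Sop_def G_def)
qed

end


context qsys begin

definition LC :: "nat \<Rightarrow> 'v set set \<Rightarrow> 'v set list \<Rightarrow> 'v set set set" where
  "LC L F w = {C \<in> edge_components (set w). card C \<ge> L \<and> C \<inter> F \<noteq> {}}"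

definition Valid :: "nat \<Rightarrow> 'v set set \<Rightarrow> nat \<Rightarrow> 'v set set set set" where
  "Valid L F m = {S. S \<subseteq> animals E L F \<and> card S = m \<and> pairwise non_overlapping S}"

lemma finite_LC: "finite (LC L F w)"
proof (rule finite_subset)
  show "LC L F w \<subseteq> Pow (set w)" by (auto simp: LC_def edge_components_def)
qed simp

lemma Valid_valid: "L \<ge> 1 \<Longrightarrow> S \<in> Valid L F m \<Longrightarrow> validS E S"
  unfolding Valid_def validS_def animals_def by (auto simp: card_gt_0_iff)

lemma finite_Valid: "finite (Valid L F m)"
proof (rule finite_subset)
  show "Valid L F m \<subseteq> Pow (Pow E)" by (auto simp: Valid_def animals_def)
qed (use finite_E in simp)

lemma LC_animals: "set w \<subseteq> E \<Longrightarrow> LC L F w \<subseteq> animals E L F"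
  unfolding LC_def animals_def edge_components_def by auto

lemma lhs_eq:
  assumes L: "L \<ge> 1" and s: "\<sigma> \<in> conf d" and t: "\<tau> \<in> conf d"
  shows "rho_m d h \<beta> E L F m \<sigma> \<tau> =
    (\<Sum>S\<in>Valid L F m. \<Sum>\<^sub>\<infinity>w\<in>{w. set w \<subseteq> E \<and> S \<subseteq> edge_components (set w)}. fw d h \<beta> w \<sigma> \<tau>)"
proof -
  have am: "animals_m E L F m = Union ` Valid L F m"
    unfolding animals_m_def Valid_def by auto
  have inj: "inj_on Union (Valid L F m)"
  proof (rule inj_onI)
    fix S1 S2 assume S1: "S1 \<in> Valid L F m" and S2: "S2 \<in> Valid L F m" and e: "\<Union>S1 = \<Union>S2"
    have "S1 = edge_components (\<Union>S1)" using comps_union[OF Valid_valid[OF L S1]] by simp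
    also have "\<dots> = S2" using comps_union[OF Valid_valid[OF L S2]] e by simp
    finally show "S1 = S2" .
  qed
  have "rho_m d h \<beta> E L F m \<sigma> \<tau> = (\<Sum>S\<in>Valid L F m. rhoG d h \<beta> E (\<Union>S) \<sigma> \<tau>)"
    unfolding rho_m_def opsum_def am by (simp add: sum.reindex[OF inj])
  also have "\<dots> = (\<Sum>S\<in>Valid L F m. \<Sum>\<^sub>\<infinity>w\<in>{w. set w \<subseteq> E \<and> S \<subseteq> edge_components (set w)}. fw d h \<beta> w \<sigma> \<tau>)"
    by (intro sum.cong refl rho_core Valid_valid[OF L] s t)
  finally show ?thesis .
qed

lemma rhs_eq:
  assumes s: "\<sigma> \<in> conf d" and t: "\<tau> \<in> conf d"
  shows "(\<Sum>\<^sub>\<infinity>k\<in>{m..}. of_nat (k choose m) * (\<Sum>\<^sub>\<infinity>w\<in>cluster_words E L F k. fw d h \<beta> w \<sigma> \<tau>)) =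
    (\<Sum>S\<in>Valid L F m. \<Sum>\<^sub>\<infinity>w\<in>{w. set w \<subseteq> E \<and> S \<subseteq> edge_components (set w)}. fw d h \<beta> w \<sigma> \<tau>)"
proof -
  define WE where "WE = {w. set w \<subseteq> E}"
  define WEm where "WEm = {w. set w \<subseteq> E \<and> m \<le> card (LC L F w)}"
  define Sub where "Sub = (\<lambda>w. {S. S \<subseteq> LC L F w \<and> card S = m})"
  define Wf where "Wf = (\<lambda>S. {w. set w \<subseteq> E \<and> S \<subseteq> edge_components (set w)})"
  let ?f = "\<lambda>w. fw d h \<beta> w \<sigma> \<tau>"
  have sWE: "?f summable_on WE" using fw_summable[OF s t] by (simp add: WE_def)
  have sSig: "(\<lambda>(w, S). ?f w) summable_on Sigma WEm Sub"
  proof -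
    have "(\<lambda>(x, y). ?f x * (\<lambda>_. 1::complex) y) summable_on WE \<times> Pow (Pow E)"
      by (rule prod_summable[OF sWE]) (use finite_E in simp)
    hence "(\<lambda>(x, y). ?f x) summable_on WE \<times> Pow (Pow E)" by simp
    moreover have "Sigma WEm Sub \<subseteq> WE \<times> Pow (Pow E)"
      by (auto simp: WEm_def WE_def Sub_def LC_def edge_components_def)
    ultimately show ?thesis by (rule summable_on_subset)
  qed
  have finSub: "finite (Sub w)" for w
  proof (rule finite_subset)
    show "Sub w \<subseteq> Pow (LC L F w)" by (auto simp: Sub_def)
  qed (simp add: finite_LC)
  have cardSub: "card (Sub w) = card (LC L F w) choose m" for w
    unfolding Sub_def by (rule n_subsets[OF finite_LC])
  have inner: "(\<Sum>\<^sub>\<infinity>S\<in>Sub w. ?f w) = of_nat (card (LC L F w) choose m) * ?f w" for w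
    using finSub[of w] by (simp add: cardSub)
  have sWEm: "(\<lambda>w. of_nat (card (LC L F w) choose m) * ?f w) summable_on WEm"
    using summable_on_Sigma_banach[of "\<lambda>w S. ?f w" WEm Sub] sSig by (simp add: inner)
  define g where "g = (\<lambda>w. (card (LC L F w), w))"
  have bij1: "bij_betw g WEm (Sigma {m..} (cluster_words E L F))"
    by (rule bij_betwI') (auto simp: g_def WEm_def cluster_words_def LC_def)
  have "(\<Sum>\<^sub>\<infinity>k\<in>{m..}. of_nat (k choose m) * (\<Sum>\<^sub>\<infinity>w\<in>cluster_words E L F k. ?f w)) =
      (\<Sum>\<^sub>\<infinity>k\<in>{m..}. \<Sum>\<^sub>\<infinity>w\<in>cluster_words E L F k. of_nat (k choose m) * ?f w)"
    by (simp add: infsum_cmult_right')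
  also have "\<dots> = (\<Sum>\<^sub>\<infinity>(k, w)\<in>Sigma {m..} (cluster_words E L F). of_nat (k choose m) * ?f w)"
  proof (rule infsum_Sigma'_banach)
    have "(\<lambda>x. (\<lambda>(k, w). of_nat (k choose m) * ?f w) (g x)) summable_on WEm"
      using sWEm by (simp add: g_def)
    thus "(\<lambda>(k, w). of_nat (k choose m) * ?f w) summable_on Sigma {m..} (cluster_words E L F)"
      using summable_on_reindex_bij_betw[OF bij1] by blast
  qed
  also have "\<dots> = (\<Sum>\<^sub>\<infinity>w\<in>WEm. of_nat (card (LC L F w) choose m) * ?f w)"
    using infsum_reindex_bij_betw[OF bij1, of "\<lambda>(k, w). of_nat (k choose m) * ?f w"] by (simp add: g_def)
  also have "\<dots> = (\<Sum>\<^sub>\<infinity>w\<in>WEm. \<Sum>\<^sub>\<infinity>S\<in>Sub w. ?f w)" by (simp add: inner)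
  also have "\<dots> = (\<Sum>\<^sub>\<infinity>(w, S)\<in>Sigma WEm Sub. ?f w)"
    using infsum_Sigma'_banach[of "\<lambda>w S. ?f w" WEm Sub] sSig by simp
  also have "\<dots> = (\<Sum>\<^sub>\<infinity>(S, w)\<in>Sigma (Valid L F m) Wf. ?f w)"
  proof -
    have bij2: "bij_betw prod.swap (Sigma WEm Sub) (Sigma (Valid L F m) Wf)"
    proof (rule bij_betwI')
      show "\<And>x y. (prod.swap x = prod.swap y) = (x = y)" by auto
      show "prod.swap x \<in> Sigma (Valid L F m) Wf" if x: "x \<in> Sigma WEm Sub" for x
      proof -
        obtain w S where xw: "x = (w, S)" by (cases x)
        have wE: "set w \<subseteq> E" and SL: "S \<subseteq> LC L F w" and cS: "card S = m"
          using x xw by (auto simp: WEm_def Sub_def)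
        have "S \<subseteq> animals E L F" using SL LC_animals[OF wE] by auto
        moreover have "pairwise non_overlapping S"
          by (rule pairwise_subset[OF comps_pairwise[of "set w"]]) (use SL in \<open>auto simp: LC_def\<close>)
        moreover have "S \<subseteq> edge_components (set w)" using SL by (auto simp: LC_def)
        ultimately show ?thesis using xw wE cS by (auto simp: Valid_def Wf_def)
      qed
      show "\<exists>x\<in>Sigma WEm Sub. y = prod.swap x" if y: "y \<in> Sigma (Valid L F m) Wf" for y
      proof -
        obtain S w where yw: "y = (S, w)" by (cases y)
        have SV: "S \<in> Valid L F m" and wE: "set w \<subseteq> E" and Sc: "S \<subseteq> edge_components (set w)"
          using y yw by (auto simp: Wf_def)
        have SL: "S \<subseteq> LC L F w" using SV Sc by (auto simp: LC_def Valid_def animals_def)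
        have "m \<le> card (LC L F w)" using card_mono[OF finite_LC SL] SV by (simp add: Valid_def)
        hence "(w, S) \<in> Sigma WEm Sub" using SL SV wE by (auto simp: WEm_def Sub_def Valid_def)
        thus ?thesis using yw by auto
      qed
    qed
    show ?thesis
      using infsum_reindex_bij_betw[OF bij2, of "\<lambda>(S, w). ?f w"] by (simp add: case_prod_unfold)
  qed
  also have "\<dots> = (\<Sum>\<^sub>\<infinity>S\<in>Valid L F m. \<Sum>\<^sub>\<infinity>w\<in>Wf S. ?f w)"
  proof (rule infsum_Sigma'_banach[symmetric])
    show "(\<lambda>(S, w). ?f w) summable_on Sigma (Valid L F m) Wf"
    proof (rule summable_on_subset)
      have "(\<lambda>(x, y). (\<lambda>_. 1::complex) x * ?f y) summable_on Valid L F m \<times> WE"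
        by (rule prod_summable[OF _ sWE]) (use finite_Valid in simp)
      thus "(\<lambda>(S, w). ?f w) summable_on Valid L F m \<times> WE" by simp
      show "Sigma (Valid L F m) Wf \<subseteq> Valid L F m \<times> WE" by (auto simp: Wf_def WE_def)
    qed
  qed
  also have "\<dots> = (\<Sum>S\<in>Valid L F m. \<Sum>\<^sub>\<infinity>w\<in>Wf S. ?f w)" using finite_Valid by simp
  finally show ?thesis by (simp add: Wf_def)
qed

end

theorem lemma10:
  fixes d :: "'v::finite \<Rightarrow> nat" and h :: "'v set \<Rightarrow> 'v qop"
    and E F :: "'v set set" and \<beta> :: real and L m :: nat
    and \<sigma> \<tau> :: "'v \<Rightarrow> nat"
  assumes "\<forall>x. d x \<ge> 1"
    and "\<forall>l\<in>E. l \<noteq> {}"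
    and "\<forall>l\<in>E. supported_in d l (h l)"
    and "\<forall>l\<in>E. hermitian d (h l)"
    and "F \<subseteq> E" and "L \<ge> 1" and "m \<ge> 1"
    and "\<sigma> \<in> conf d" and "\<tau> \<in> conf d"
  shows "rho_m d h \<beta> E L F m \<sigma> \<tau> =
    (\<Sum>\<^sub>\<infinity>k\<in>{m..}. of_nat (k choose m) * (\<Sum>\<^sub>\<infinity>w\<in>cluster_words E L F k. fw d h \<beta> w \<sigma> \<tau>))"
proof -
  interpret qsys d h E \<beta>
    by unfold_locales (use assms(2,3) in auto)
  show ?thesis
    using lhs_eq[OF assms(6,8,9)] rhs_eq[OF assms(8,9)] by simp
qed


end
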